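(* Let $s,y\in\mathbb{R}^n$ with $s^Ty>0$, let $\tau\in[0,1]$, and for $\alpha>0$ define $$\phi_\tau(\alpha)=\Big\|\tau\Big(\tfrac{1}{\alpha}s-y\Big)+(1-\tau)(s-\alpha y)\Big\|^2 .$$ Let $\alpha^{BB1}=\dfrac{s^Ts}{s^Ty}$ and $\alpha^{BB2}=\dfrac{s^Ty}{y^Ty}$. Then the equation $\phi_\tau'(\alpha)=0$ has a unique root in the interval $[\alpha^{BB2},\alpha^{BB1}]$.
   Context: $\|\cdot\|$ denotes the Euclidean norm and $\phi_\tau'$ the derivative of $\phi_\tau$ with respect to $\alpha$. (Note $s^Ty>0$ forces $y\neq 0$, and by Cauchy–Schwarz $\alpha^{BB2}\le\alpha^{BB1}$.) *)

theory Defs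
  imports "HOL-Analysis.Analysis"
begin

definition phi :: "real \<Rightarrow> real ^ 'n \<Rightarrow> real ^ 'n \<Rightarrow> real \<Rightarrow> real" where
  "phi \<tau> s y \<alpha> = (norm (\<tau> *\<^sub>R ((1 / \<alpha>) *\<^sub>R s - y) + (1 - \<tau>) *\<^sub>R (s - \<alpha> *\<^sub>R y)))\<^sup>2"

definition alpha_BB1 :: "real ^ 'n \<Rightarrow> real ^ 'n \<Rightarrow> real" where
  "alpha_BB1 s y = (s \<bullet> s) / (s \<bullet> y)"

definition alpha_BB2 :: "real ^ 'n \<Rightarrow> real ^ 'n \<Rightarrow> real" where
  "alpha_BB2 s y = (s \<bullet> y) / (y \<bullet> y)"

end

theory Submission
  imports Defs
begin

lemma phi_closed:
  fixes s y :: "real ^ 'n"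
  assumes "x > 0"
  shows "phi \<tau> s y x = (\<tau> + (1-\<tau>)*x)^2 * ((s\<bullet>s) - 2*(s\<bullet>y)*x + (y\<bullet>y)*x^2) / x^2"
proof -
  have v: "\<tau> *\<^sub>R ((1 / x) *\<^sub>R s - y) + (1 - \<tau>) *\<^sub>R (s - x *\<^sub>R y)
      = ((\<tau> + (1-\<tau>)*x)/x) *\<^sub>R (s - x *\<^sub>R y)"
    using assms by (simp add: vec_eq_iff field_simps)
  have n: "(norm (s - x *\<^sub>R y))^2 = (s\<bullet>s) - 2*(s\<bullet>y)*x + (y\<bullet>y)*x^2"
    unfolding power2_norm_eq_inner by (simp add: inner_diff_left inner_diff_right inner_commute power2_eq_square algebra_simps)
  show ?thesis unfolding phi_def v using assms
    by (simp add: power_mult_distrib n power_divide)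
qed

lemma phi_deriv:
  fixes s y :: "real ^ 'n"
  assumes "x > 0"
  shows "(phi \<tau> s y has_real_derivative
     2*(\<tau> + (1-\<tau>)*x) * ((1-\<tau>)*x^2*((y\<bullet>y)*x - (s\<bullet>y)) + \<tau>*((s\<bullet>y)*x - (s\<bullet>s))) / x^3) (at x)"
proof -
  define a where "a = s\<bullet>s"
  define b where "b = s\<bullet>y"
  define c where "c = y\<bullet>y"
  let ?f = "\<lambda>x. (\<tau> + (1-\<tau>)*x)^2 * (a - 2*b*x + c*x^2) / x^2"
  have "(?f has_real_derivative
     2*(\<tau> + (1-\<tau>)*x) * ((1-\<tau>)*x^2*(c*x - b) + \<tau>*(b*x - a)) / x^3) (at x)"
    using assms
    apply (intro derivative_eq_intros refl)
    apply (simp_all add: divide_simps eval_nat_numeral)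
    apply algebra
    done
  then have "(?f has_real_derivative
     2*(\<tau> + (1-\<tau>)*x) * ((1-\<tau>)*x^2*(c*x - b) + \<tau>*(b*x - a)) / x^3) (at x)" .
  then show ?thesis unfolding a_def b_def c_def
    apply (rule has_field_derivative_transform_within_open[where S="{0<..}"])
    using assms by (auto simp: phi_closed)
qed


lemma F_mono:
  fixes a b c \<tau> x z :: real
  assumes "b > 0" "c > 0" "0 \<le> \<tau>" "\<tau> \<le> 1" "b/c \<le> x" "x < z"
  shows "(1-\<tau>)*x^2*(c*x - b) + \<tau>*(b*x - a) < (1-\<tau>)*z^2*(c*z - b) + \<tau>*(b*z - a)"
proof -
  have cx: "c*x \<ge> b" using assms by (simp add: field_simps)
  have cz: "c*z \<ge> b" using assms cx by (smt (verit) mult_strict_left_mono)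
  have xpos: "x > 0" using assms by (smt (verit) divide_pos_pos)
  have A: "c*(z^2+z*x+x^2) - b*(z+x) > 0"
  proof -
    have "c*z^2 \<ge> b*z" using cz xpos assms by (simp add: power2_eq_square mult_right_mono mult.assoc[symmetric])
    moreover have "c*z*x \<ge> b*x" using cz xpos by (simp add: mult_right_mono)
    moreover have "c*x^2 > 0" using xpos assms by simp
    ultimately show ?thesis by (simp add: algebra_simps)
  qed
  have B: "(1-\<tau>)*(c*(z^2+z*x+x^2) - b*(z+x)) + \<tau>*b > 0"
  proof (cases "\<tau> = 1")
    case True then show ?thesis using assms by simp
  next
    case False
    then have "(1-\<tau>)*(c*(z^2+z*x+x^2) - b*(z+x)) > 0" using A assms by simp
    moreover have "\<tau>*b \<ge> 0" using assms by simp
    ultimately show ?thesis by linarith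
  qed
  have "((1-\<tau>)*z^2*(c*z - b) + \<tau>*(b*z - a)) - ((1-\<tau>)*x^2*(c*x - b) + \<tau>*(b*x - a))
     = (z-x)*((1-\<tau>)*(c*(z^2+z*x+x^2) - b*(z+x)) + \<tau>*b)"
    by (simp add: algebra_simps power2_eq_square)
  moreover have "(z-x)*((1-\<tau>)*(c*(z^2+z*x+x^2) - b*(z+x)) + \<tau>*b) > 0"
    using B assms by simp
  ultimately show ?thesis by linarith
qed

theorem proposition1:
  fixes s y :: "real ^ 'n" and \<tau> :: real
  assumes "s \<bullet> y > 0" and "0 \<le> \<tau>" and "\<tau> \<le> 1"
  shows "\<exists>!\<alpha>. \<alpha> \<in> {alpha_BB2 s y .. alpha_BB1 s y} \<and> deriv (phi \<tau> s y) \<alpha> = 0"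
proof -
  define a where "a = s\<bullet>s"
  define b where "b = s\<bullet>y"
  define c where "c = y\<bullet>y"
  define F where "F = (\<lambda>x. (1-\<tau>)*x^2*(c*x - b) + \<tau>*(b*x - a))"
  have bpos: "b > 0" using assms b_def by simp
  have "y \<noteq> 0" using assms by auto
  then have cpos: "c > 0" unfolding c_def by simp
  have "\<bar>b\<bar> \<le> norm s * norm y" unfolding b_def by (rule Cauchy_Schwarz_ineq2)
  then have "b^2 \<le> (norm s * norm y)^2" using bpos by (simp add: power_mono)
  then have cs: "b^2 \<le> a*c" unfolding a_def c_def by (simp add: power_mult_distrib power2_norm_eq_inner)
  have apos: "a > 0" using cs bpos cpos
    by (smt (verit) mult_nonpos_nonneg zero_less_power)
  have bb2: "alpha_BB2 s y = b/c" by (simp add: alpha_BB2_def b_def c_def)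
  have bb1: "alpha_BB1 s y = a/b" by (simp add: alpha_BB1_def a_def b_def)
  have le: "b/c \<le> a/b" using cs bpos cpos by (simp add: field_simps power2_eq_square)
  have bcpos: "b/c > 0" using bpos cpos by simp
  have key: "deriv (phi \<tau> s y) x = 0 \<longleftrightarrow> F x = 0" if "x > 0" for x
  proof -
    have q: "\<tau> + (1-\<tau>)*x > 0"
    proof (cases "\<tau> = 0")
      case True then show ?thesis using that by simp
    next
      case False then show ?thesis using assms that by (smt (verit) mult_nonneg_nonneg)
    qed
    have "deriv (phi \<tau> s y) x = 2*(\<tau> + (1-\<tau>)*x) * F x / x^3"
      unfolding F_def a_def b_def c_def
      by (rule DERIV_imp_deriv[OF phi_deriv[OF that]])
    then show ?thesis using q that by simp
  qed
  have Fl: "F (b/c) \<le> 0"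
  proof -
    have "F (b/c) = \<tau>*(b*(b/c) - a)" unfolding F_def using cpos by simp
    moreover have "b*(b/c) - a \<le> 0" using cs cpos by (simp add: field_simps power2_eq_square)
    ultimately show ?thesis using assms by (simp add: mult_nonneg_nonpos)
  qed
  have Fr: "F (a/b) \<ge> 0"
  proof -
    have "c*(a/b) - b \<ge> 0" using cs bpos by (simp add: field_simps power2_eq_square)
    moreover have "b*(a/b) - a = 0" using bpos by simp
    ultimately show ?thesis unfolding F_def using assms by simp
  qed
  have "\<exists>x\<ge>b/c. x \<le> a/b \<and> F x = 0"
    by (rule IVT[OF Fl Fr le]) (auto simp: F_def intro!: continuous_intros)
  then obtain x where x: "b/c \<le> x" "x \<le> a/b" "F x = 0" by blast
  show ?thesis
  proof (rule ex1I[where a=x])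
    show "x \<in> {alpha_BB2 s y..alpha_BB1 s y} \<and> deriv (phi \<tau> s y) x = 0"
      using x key bcpos bb1 bb2 by simp
  next
    fix z assume z: "z \<in> {alpha_BB2 s y..alpha_BB1 s y} \<and> deriv (phi \<tau> s y) z = 0"
    then have z1: "b/c \<le> z" "F z = 0" using key bcpos bb1 bb2 by auto
    show "z = x"
    proof (rule ccontr)
      assume "z \<noteq> x"
      then have "z < x \<or> x < z" by linarith
      then show False
      proof
        assume "z < x" then have "F z < F x" unfolding F_def using F_mono bpos cpos assms z1 by blast
        then show False using x z1 by simp
      next
        assume "x < z" then have "F x < F z" unfolding F_def using F_mono bpos cpos assms x by blast
        then show False using x z1 by simp
      qed
    qed
  qed
qed

end
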